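(* The direct product $\mathbb{N}\times\mathbb{N}$ contains uncountably many pairwise non-isomorphic subsemigroups.
   Context: $\mathbb{N}=\{1,2,3,\dots\}$ denotes the free monogenic semigroup, i.e. the positive integers under addition; $\mathbb{N}\times\mathbb{N}$ is the direct product with componentwise addition. *)

theory Defs
  imports "HOL-Library.Countable_Set"
begin

text \<open>The free monogenic semigroup N = {1,2,3,...} under addition; N x N with
componentwise addition, carried by pairs of positive naturals.\<close>

definition NN :: "(nat \<times> nat) set" where
  "NN = {(a, b). 1 \<le> a \<and> 1 \<le> b}"

definition padd :: "nat \<times> nat \<Rightarrow> nat \<times> nat \<Rightarrow> nat \<times> nat" where
  "padd x y = (fst x + fst y, snd x + snd y)"

definition subsemigroup_NN :: "(nat \<times> nat) set \<Rightarrow> bool" where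
  "subsemigroup_NN S \<longleftrightarrow> S \<subseteq> NN \<and> S \<noteq> {} \<and> (\<forall>x\<in>S. \<forall>y\<in>S. padd x y \<in> S)"

definition sg_isomorphic :: "(nat \<times> nat) set \<Rightarrow> (nat \<times> nat) set \<Rightarrow> bool" where
  "sg_isomorphic S T \<longleftrightarrow>
     (\<exists>f. bij_betw f S T \<and> (\<forall>x\<in>S. \<forall>y\<in>S. f (padd x y) = padd (f x) (f y)))"

end

theory Submission
  imports Defs
begin

definition hom_on :: "(nat \<times> nat) set \<Rightarrow> (nat \<times> nat \<Rightarrow> nat \<times> nat) \<Rightarrow> bool" where
  "hom_on S f \<longleftrightarrow> (\<forall>x\<in>S. \<forall>y\<in>S. f (padd x y) = padd (f x) (f y))"

definition smul :: "nat \<Rightarrow> nat \<times> nat \<Rightarrow> nat \<times> nat" where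
  "smul k p = (k * fst p, k * snd p)"

lemma L1:
  assumes cl: "\<forall>x\<in>S. \<forall>y\<in>S. padd x y \<in> S" and h: "hom_on S f" and s: "s \<in> S"
  shows "smul (Suc m) s \<in> S \<and> f (smul (Suc m) s) = smul (Suc m) (f s)"
proof (induction m)
  case 0
  then show ?case using s by (simp add: smul_def)
next
  case (Suc m)
  have e: "smul (Suc (Suc m)) s = padd (smul (Suc m) s) s"
    by (simp add: smul_def padd_def)
  have e2: "smul (Suc (Suc m)) (f s) = padd (smul (Suc m) (f s)) (f s)"
    by (simp add: smul_def padd_def)
  show ?case using Suc cl h s unfolding e e2 hom_on_def by auto
qed

definition P3 where
  "P3 a b c z x y = padd (smul (Suc a) z) (padd (smul (Suc b) x) (smul (Suc c) y))"

lemma L2: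
  assumes cl: "\<forall>x\<in>S. \<forall>y\<in>S. padd x y \<in> S" and h: "hom_on S f"
    and "z \<in> S" "x \<in> S" "y \<in> S"
  shows "f (P3 a b c z x y) = P3 a b c (f z) (f x) (f y)"
  using L1[OF cl h, of z a] L1[OF cl h, of x b] L1[OF cl h, of y c] assms
  unfolding P3_def hom_on_def by auto

lemma P3_fst: "int (fst (P3 a b c z x y)) = (int a + 1) * int (fst z) + (int b + 1) * int (fst x) + (int c + 1) * int (fst y)"
  by (simp add: P3_def padd_def smul_def algebra_simps)

lemma P3_snd: "int (snd (P3 a b c z x y)) = (int a + 1) * int (snd z) + (int b + 1) * int (snd x) + (int c + 1) * int (snd y)"
  by (simp add: P3_def padd_def smul_def algebra_simps)

lemma lin:
  fixes a b c a' b' c' z x y :: int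
  assumes "(a+1)*z+(b+1)*x+(c+1)*y = (a'+1)*z+(b'+1)*x+(c'+1)*y"
  shows "(a-a')*z = (b'-b)*x + (c'-c)*y"
  using assms by (simp add: algebra_simps)

lemma par_det:
  assumes cl: "\<forall>x\<in>S. \<forall>y\<in>S. padd x y \<in> S" and hf: "hom_on S f" and hg: "hom_on S g"
    and x: "x \<in> S" and z: "z \<in> S" and x1: "fst x \<ge> 1" and z1: "fst z \<ge> 1"
    and par: "fst x * snd z = snd x * fst z" and fx: "f x = g x"
  shows "f z = g z"
proof -
  obtain m where m: "fst x = Suc m" using x1 by (cases "fst x") auto
  obtain n where n: "fst z = Suc n" using z1 by (cases "fst z") auto
  have eq: "smul (Suc m) z = smul (Suc n) x"
    using par m n by (simp add: smul_def mult.commute)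
  have "smul (Suc m) (f z) = smul (Suc m) (g z)"
    using L1[OF cl hf z, of m] L1[OF cl hf x, of n] L1[OF cl hg z, of m] L1[OF cl hg x, of n]
      eq fx by simp
  then have "Suc m * fst (f z) = Suc m * fst (g z)" "Suc m * snd (f z) = Suc m * snd (g z)"
    by (simp_all only: smul_def prod.inject)
  then show ?thesis by (metis Suc_neq_Zero mult_left_cancel prod_eq_iff)
qed

lemma gen_det:
  assumes cl: "\<forall>x\<in>S. \<forall>y\<in>S. padd x y \<in> S" and hf: "hom_on S f" and hg: "hom_on S g"
    and x: "x \<in> S" and y: "y \<in> S" and z: "z \<in> S"
    and D: "int (fst x) * int (snd y) \<noteq> int (snd x) * int (fst y)"
    and fx: "f x = g x" and fy: "f y = g y"
  shows "f z = g z"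
proof -
  define D where "D = int (fst x) * int (snd y) - int (snd x) * int (fst y)"
  define al where "al = int (fst z) * int (snd y) - int (snd z) * int (fst y)"
  define be where "be = int (fst x) * int (snd z) - int (snd x) * int (fst z)"
  have D0: "D \<noteq> 0" using assms(7) unfolding D_def by simp
  have key: "P3 (nat D) (nat (-al)) (nat (-be)) z x y = P3 (nat (-D)) (nat al) (nat be) z x y"
  proof -
    have i1: "D * int (fst z) = al * int (fst x) + be * int (fst y)"
      unfolding D_def al_def be_def by (simp add: algebra_simps)
    have i2: "D * int (snd z) = al * int (snd x) + be * int (snd y)"
      unfolding D_def al_def be_def by (simp add: algebra_simps)
    have c1: "int (fst (P3 (nat D) (nat (-al)) (nat (-be)) z x y)) = int (fst (P3 (nat (-D)) (nat al) (nat be) z x y))"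
      using i1 by (simp add: P3_def padd_def smul_def algebra_simps)
    have c2: "int (snd (P3 (nat D) (nat (-al)) (nat (-be)) z x y)) = int (snd (P3 (nat (-D)) (nat al) (nat be) z x y))"
      using i2 by (simp add: P3_def padd_def smul_def algebra_simps)
    show ?thesis using c1 c2 by (simp add: prod_eq_iff)
  qed
  have kf: "P3 (nat D) (nat (-al)) (nat (-be)) (f z) (f x) (f y) = P3 (nat (-D)) (nat al) (nat be) (f z) (f x) (f y)"
    using key L2[OF cl hf z x y] by metis
  have kg: "P3 (nat D) (nat (-al)) (nat (-be)) (g z) (g x) (g y) = P3 (nat (-D)) (nat al) (nat be) (g z) (g x) (g y)"
    using key L2[OF cl hg z x y] by metis
  have r: "D * int (fst (h z)) = al * int (fst (h x)) + be * int (fst (h y)) \<and>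
           D * int (snd (h z)) = al * int (snd (h x)) + be * int (snd (h y))"
    if "P3 (nat D) (nat (-al)) (nat (-be)) (h z) (h x) (h y) = P3 (nat (-D)) (nat al) (nat be) (h z) (h x) (h y)" for h
  proof -
    from that have a: "int (fst (P3 (nat D) (nat (-al)) (nat (-be)) (h z) (h x) (h y))) = int (fst (P3 (nat (-D)) (nat al) (nat be) (h z) (h x) (h y)))"
      and b: "int (snd (P3 (nat D) (nat (-al)) (nat (-be)) (h z) (h x) (h y))) = int (snd (P3 (nat (-D)) (nat al) (nat be) (h z) (h x) (h y)))"
      by simp_all
    have dd: "int (nat D) - int (nat (-D)) = D" "int (nat al) - int (nat (-al)) = al"
      "int (nat be) - int (nat (-be)) = be" by simp_all
    show ?thesis using lin[OF a[unfolded P3_fst]] lin[OF b[unfolded P3_snd]] dd by simp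
  qed
  have "D * int (fst (f z)) = D * int (fst (g z))" "D * int (snd (f z)) = D * int (snd (g z))"
    using r[OF kf] r[OF kg] fx fy by simp_all
  then show ?thesis using D0 by (simp add: prod_eq_iff)
qed


lemma sub_cl: "subsemigroup_NN S \<Longrightarrow> \<forall>x\<in>S. \<forall>y\<in>S. padd x y \<in> S"
  unfolding subsemigroup_NN_def by blast

lemma det_pair:
  assumes S: "subsemigroup_NN S"
  shows "\<exists>x0\<in>S. \<exists>y0\<in>S. \<forall>f g. hom_on S f \<longrightarrow> hom_on S g \<longrightarrow> f x0 = g x0 \<longrightarrow> f y0 = g y0
            \<longrightarrow> (\<forall>z\<in>S. f z = g z)"
proof -
  have cl: "\<forall>x\<in>S. \<forall>y\<in>S. padd x y \<in> S" using sub_cl[OF S] .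
  have sub: "S \<subseteq> NN" using S unfolding subsemigroup_NN_def by blast
  obtain x0 where x0: "x0 \<in> S" using S unfolding subsemigroup_NN_def by blast
  show ?thesis
  proof (cases "\<exists>y\<in>S. int (fst x0) * int (snd y) \<noteq> int (snd x0) * int (fst y)")
    case True
    then obtain y0 where y0: "y0 \<in> S" "int (fst x0) * int (snd y0) \<noteq> int (snd x0) * int (fst y0)"
      by blast
    show ?thesis
      using gen_det[OF cl _ _ x0 y0(1) _ y0(2)] x0 y0(1) by blast
  next
    case False
    have "\<forall>f g. hom_on S f \<longrightarrow> hom_on S g \<longrightarrow> f x0 = g x0 \<longrightarrow> f x0 = g x0 \<longrightarrow> (\<forall>z\<in>S. f z = g z)"
    proof (intro allI impI ballI)
      fix f g z assume hf: "hom_on S f" and hg: "hom_on S g" and e: "f x0 = g x0" and z: "z \<in> S"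
      have p: "fst x0 * snd z = snd x0 * fst z"
        using False z by (metis of_nat_eq_iff of_nat_mult)
      have "fst x0 \<ge> 1" "fst z \<ge> 1" using sub x0 z unfolding NN_def by auto
      then show "f z = g z" using par_det[OF cl hf hg x0 z _ _ p e] by simp
    qed
    then show ?thesis using x0 by blast
  qed
qed

lemma class_countable:
  assumes S: "subsemigroup_NN S"
  shows "countable {T. sg_isomorphic S T}"
proof -
  obtain x0 y0 where x0: "x0 \<in> S" and y0: "y0 \<in> S" and det:
    "\<And>f g. hom_on S f \<Longrightarrow> hom_on S g \<Longrightarrow> f x0 = g x0 \<Longrightarrow> f y0 = g y0 \<Longrightarrow> (\<forall>z\<in>S. f z = g z)"
    using det_pair[OF S] by blast
  define G where "G = (\<lambda>uv :: (nat \<times> nat) \<times> (nat \<times> nat). SOME T. \<exists>f. bij_betw f S T \<and> hom_on S f \<and> f x0 = fst uv \<and> f y0 = snd uv)"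
  have "{T. sg_isomorphic S T} \<subseteq> G ` UNIV"
  proof
    fix T assume "T \<in> {T. sg_isomorphic S T}"
    then obtain f where f: "bij_betw f S T" "hom_on S f"
      unfolding sg_isomorphic_def hom_on_def by auto
    let ?uv = "(f x0, f y0)"
    have ex: "\<exists>T. \<exists>g. bij_betw g S T \<and> hom_on S g \<and> g x0 = fst ?uv \<and> g y0 = snd ?uv"
      using f by auto
    obtain g where g: "bij_betw g S (G ?uv)" "hom_on S g" "g x0 = f x0" "g y0 = f y0"
      using someI_ex[OF ex] unfolding G_def by auto
    have "\<forall>z\<in>S. g z = f z" using det[OF g(2) f(2) g(3) g(4)] .
    then have "g ` S = f ` S" by (simp add: image_def)
    then have "G ?uv = T" using g(1) f(1) by (simp add: bij_betw_def)
    then show "T \<in> G ` UNIV" by (metis rangeI)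
  qed
  moreover have "countable (G ` UNIV)" by simp
  ultimately show ?thesis by (rule countable_subset)
qed

lemma iso_refl: "sg_isomorphic S S"
  unfolding sg_isomorphic_def by (rule exI[of _ id]) simp

lemma iso_sym:
  assumes S: "subsemigroup_NN S" and i: "sg_isomorphic S T"
  shows "sg_isomorphic T S"
proof -
  obtain f where f: "bij_betw f S T" and h: "\<forall>x\<in>S. \<forall>y\<in>S. f (padd x y) = padd (f x) (f y)"
    using i unfolding sg_isomorphic_def by blast
  define g where "g = inv_into S f"
  have gb: "bij_betw g T S" unfolding g_def by (rule bij_betw_inv_into[OF f])
  have inj: "inj_on f S" using f bij_betw_def by blast
  have "\<forall>a\<in>T. \<forall>b\<in>T. g (padd a b) = padd (g a) (g b)"
  proof (intro ballI)
    fix a b assume a: "a \<in> T" and b: "b \<in> T"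
    have ga: "g a \<in> S" "f (g a) = a" using a gb f unfolding g_def
      by (auto simp: bij_betw_def f_inv_into_f inv_into_into)
    have gb': "g b \<in> S" "f (g b) = b" using b gb f unfolding g_def
      by (auto simp: bij_betw_def f_inv_into_f inv_into_into)
    have in_S: "padd (g a) (g b) \<in> S" using sub_cl[OF S] ga gb' by blast
    have "f (padd (g a) (g b)) = padd a b" using h ga gb' by simp
    then show "g (padd a b) = padd (g a) (g b)"
      using inv_into_f_f[OF inj in_S] unfolding g_def by simp
  qed
  then show ?thesis unfolding sg_isomorphic_def using gb by blast
qed

lemma iso_trans:
  assumes "sg_isomorphic S T" "sg_isomorphic T U"
  shows "sg_isomorphic S U"
proof -
  obtain f where f: "bij_betw f S T" and hf: "\<forall>x\<in>S. \<forall>y\<in>S. f (padd x y) = padd (f x) (f y)"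
    using assms(1) unfolding sg_isomorphic_def by blast
  obtain g where g: "bij_betw g T U" and hg: "\<forall>x\<in>T. \<forall>y\<in>T. g (padd x y) = padd (g x) (g y)"
    using assms(2) unfolding sg_isomorphic_def by blast
  have "bij_betw (g \<circ> f) S U" using f g by (rule bij_betw_trans)
  moreover have "\<forall>x\<in>S. \<forall>y\<in>S. (g \<circ> f) (padd x y) = padd ((g \<circ> f) x) ((g \<circ> f) y)"
    using hf hg f by (auto simp: bij_betw_def)
  ultimately show ?thesis unfolding sg_isomorphic_def by blast
qed

lemma uncountable_nat_sets: "uncountable (UNIV :: nat set set)"
proof
  assume "countable (UNIV :: nat set set)"
  then obtain f :: "nat \<Rightarrow> nat set" where "range f = UNIV"
    by (metis UNIV_not_empty uncountable_def)
  then obtain n where "f n = {m. m \<notin> f m}" by (metis rangeE UNIV_I)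
  then show False by blast
qed

definition SB :: "nat set \<Rightarrow> (nat \<times> nat) set" where
  "SB B = {(a, b). 2 \<le> a \<and> 1 \<le> b} \<union> {(1, Suc n) | n. n \<in> B}"

lemma SB_sub: "subsemigroup_NN (SB B)"
  unfolding subsemigroup_NN_def SB_def NN_def padd_def by auto

lemma SB_inj: "inj SB"
proof
  fix A B assume e: "SB A = SB B"
  have "n \<in> A \<longleftrightarrow> (1, Suc n) \<in> SB A" for n A unfolding SB_def by auto
  then show "A = B" using e by blast
qed

theorem theoremA:
  shows "\<exists>F. uncountable F \<and> (\<forall>S\<in>F. subsemigroup_NN S) \<and>
             (\<forall>S\<in>F. \<forall>T\<in>F. S \<noteq> T \<longrightarrow> \<not> sg_isomorphic S T)"
proof -
  define U where "U = {S. subsemigroup_NN S}"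
  define R where "R = {(S, T). S \<in> U \<and> T \<in> U \<and> sg_isomorphic S T}"
  have eq: "equiv U R"
    unfolding equiv_def refl_on_def sym_def trans_def R_def U_def
    using iso_refl iso_sym iso_trans by blast
  have Uunc: "uncountable U"
  proof
    assume "countable U"
    moreover have "SB ` UNIV \<subseteq> U" unfolding U_def using SB_sub by blast
    ultimately have "countable (SB ` UNIV)" by (rule countable_subset[rotated])
    then have "countable (UNIV :: nat set set)"
      using countable_image_inj_on SB_inj by blast
    then show False using uncountable_nat_sets by blast
  qed
  have cls: "countable X" if Xq: "X \<in> U // R" for X
  proof -
    obtain S where X: "X = R `` {S}" and S: "S \<in> U" using quotientE[OF Xq] by blast
    have "X \<subseteq> {T. sg_isomorphic S T}" unfolding X R_def by auto
    then show ?thesis using class_countable S unfolding U_def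
      by (meson countable_subset mem_Collect_eq)
  qed
  have Qunc: "uncountable (U // R)"
  proof
    assume c: "countable (U // R)"
    have "countable (\<Union>(U // R))" using countable_UN[OF c cls, of "\<lambda>X. X"] by simp
    then show False using Union_quotient[OF eq] Uunc by simp
  qed
  define rep where "rep = (\<lambda>X :: (nat \<times> nat) set set. SOME S. S \<in> X)"
  have rep_in: "rep X \<in> X" if "X \<in> U // R" for X
    unfolding rep_def using in_quotient_imp_non_empty[OF eq that] by (simp add: some_in_eq)
  have inj: "inj_on rep (U // R)"
  proof (rule inj_onI)
    fix X Y assume X: "X \<in> U // R" and Y: "Y \<in> U // R" and e: "rep X = rep Y"
    have "X \<inter> Y \<noteq> {}" using rep_in[OF X] rep_in[OF Y] e by auto
    then show "X = Y" using quotient_disj[OF eq X Y] by blast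
  qed
  define F where "F = rep ` (U // R)"
  have "uncountable F"
    unfolding F_def using Qunc inj countable_image_inj_on by blast
  moreover have "\<forall>S\<in>F. subsemigroup_NN S"
  proof
    fix S assume "S \<in> F"
    then obtain X where X: "X \<in> U // R" and S: "S = rep X" unfolding F_def by blast
    have "X \<subseteq> U" using X eq by (metis Union_quotient Union_upper)
    then show "subsemigroup_NN S" using rep_in[OF X] S unfolding U_def by blast
  qed
  moreover have "\<forall>S\<in>F. \<forall>T\<in>F. S \<noteq> T \<longrightarrow> \<not> sg_isomorphic S T"
  proof (intro ballI impI notI)
    fix S T assume "S \<in> F" "T \<in> F" and ne: "S \<noteq> T" and iso: "sg_isomorphic S T"
    then obtain X Y where X: "X \<in> U // R" "S = rep X" and Y: "Y \<in> U // R" "T = rep Y"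
      unfolding F_def by blast
    obtain a where a: "X = R `` {a}" "a \<in> U" using quotientE[OF X(1)] by blast
    obtain b where b: "Y = R `` {b}" "b \<in> U" using quotientE[OF Y(1)] by blast
    have SX: "S \<in> X" and TY: "T \<in> Y" using rep_in X Y by auto
    have SU: "S \<in> U" and TU: "T \<in> U" using SX TY a b R_def by auto
    have "(S, T) \<in> R" using iso SU TU unfolding R_def by simp
    have "(a, S) \<in> R" "(b, T) \<in> R" using SX TY a b by auto
    then have "(a, b) \<in> R" using \<open>(S, T) \<in> R\<close> eq unfolding equiv_def sym_def trans_def by blast
    then have "X = Y" using a b eq_equiv_class_iff[OF eq] by blast
    then show False using ne X Y by simp
  qed
  ultimately show ?thesis by blast
qed

end
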